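(* Let $\Sigma$ be an alphabet, $n\ge1$, and let $p(x)\in\mathrm{GF}(2)[x]$ be an irreducible polynomial of degree $L\ge n$. Let $h_1:\Sigma\to\mathrm{GF}(2)[x]/p(x)$ be a random function whose values $h_1(c)$, $c\in\Sigma$, are mutually independent and uniformly distributed on the field $\mathrm{GF}(2)[x]/p(x)$ (which has $2^L$ elements). Define $h(a_1,\dots,a_n)=h_1(a_1)x^{n-1}+h_1(a_2)x^{n-2}+\cdots+h_1(a_n)$ computed in $\mathrm{GF}(2)[x]/p(x)$. Then $h$ is pairwise independent: for all distinct $a,a'\in\Sigma^n$ and all $y,y'\in\mathrm{GF}(2)[x]/p(x)$, $P(h(a)=y\wedge h(a')=y')=4^{-L}$.
   Context: This hash family is called General. Elements of $\mathrm{GF}(2)[x]/p(x)$ are identified with polynomials of degree at most $L-1$ over $\mathrm{GF}(2)$, equivalently with $L$-bit integers. *)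

theory Defs
  imports "HOL-Probability.Probability" "HOL-Library.Z2" "HOL-Computational_Algebra.Polynomial"
begin

text \<open>GF(2) is the type bit (HOL-Library.Z2); GF(2)[x] is bit poly.
  The field GF(2)[x]/p(x) is represented by the residues: polynomials of degree < deg p,
  with arithmetic modulo p.\<close>

definition GF2_field :: "bit poly \<Rightarrow> bit poly set" where
  "GF2_field p = {q. degree q < degree p}"

definition general_hash :: "bit poly \<Rightarrow> ('a \<Rightarrow> bit poly) \<Rightarrow> 'a list \<Rightarrow> bit poly" where
  "general_hash p h1 a =
     (\<Sum>i<length a. h1 (a ! i) * [:0, 1:] ^ (length a - 1 - i)) mod p"

end

theory Submission
  imports Defs "HOL-Computational_Algebra.Polynomial_Factorial" "HOL-Computational_Algebra.Euclidean_Algorithm"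
begin

instantiation bit :: "{unique_euclidean_ring, normalization_euclidean_semiring, normalization_semidom_multiplicative}"
begin
definition unit_factor_bit :: "bit \<Rightarrow> bit" where [simp]: "unit_factor_bit x = x"
definition normalize_bit :: "bit \<Rightarrow> bit" where [simp]: "normalize_bit x = x"
definition euclidean_size_bit :: "bit \<Rightarrow> nat" where [simp]: "euclidean_size_bit x = (if x = 0 then 0 else 1)"
definition division_segment_bit :: "bit \<Rightarrow> bit" where [simp]: "division_segment_bit x = 1"
instance
  by standard (auto simp: bit_not_zero_iff modulo_bit_unfold)
end

instantiation bit :: euclidean_ring_gcd
begin
definition gcd_bit :: "bit \<Rightarrow> bit \<Rightarrow> bit" where "gcd_bit = Euclidean_Algorithm.gcd"
definition lcm_bit :: "bit \<Rightarrow> bit \<Rightarrow> bit" where "lcm_bit = Euclidean_Algorithm.lcm"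
definition Gcd_bit :: "bit set \<Rightarrow> bit" where "Gcd_bit = Euclidean_Algorithm.Gcd"
definition Lcm_bit :: "bit set \<Rightarrow> bit" where "Lcm_bit = Euclidean_Algorithm.Lcm"
instance by standard (simp_all add: gcd_bit_def lcm_bit_def Gcd_bit_def Lcm_bit_def)
end

instance bit :: field_gcd ..


definition al :: "'a list \<Rightarrow> 'a \<Rightarrow> bit poly" where
  "al a c = (\<Sum>i<length a. monom (if a!i = c then 1 else 0) (length a - 1 - i))"

definition sp :: "nat \<Rightarrow> bit poly" where
  "sp n = (\<Sum>i<n. monom 1 (n - 1 - i))"

lemma deg_al: "degree (al a c) \<le> length a - 1"
  unfolding al_def by (rule degree_sum_le) (auto intro: order.trans[OF degree_monom_le])

lemma deg_sp: "degree (sp n) \<le> n - 1"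
  unfolding sp_def by (rule degree_sum_le) (auto intro: order.trans[OF degree_monom_le])

lemma coeff_al: assumes "i < length a"
  shows "coeff (al a c) (length a - 1 - i) = (if a!i = c then 1 else 0)"
proof -
  have "coeff (al a c) (length a - 1 - i) =
     (\<Sum>j<length a. if j = i then (if a!j = c then 1 else 0) else 0)"
    unfolding al_def coeff_sum coeff_monom
    by (rule sum.cong) (use assms in auto)
  also have "\<dots> = (if a!i = c then 1 else 0)" using assms by simp
  finally show ?thesis .
qed

lemma coeff_sp: "n \<ge> 1 \<Longrightarrow> coeff (sp n) 0 = 1"
proof -
  assume n: "n \<ge> 1"
  have "coeff (sp n) 0 = (\<Sum>j<n. if j = n - 1 then 1 else 0)"
    unfolding sp_def coeff_sum coeff_monom by (rule sum.cong) auto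
  also have "\<dots> = 1" using n by simp
  finally show ?thesis .
qed

lemma sum_al: assumes "finite S" "set a \<subseteq> S"
  shows "(\<Sum>c\<in>S. al a c) = sp (length a)"
proof -
  have "(\<Sum>c\<in>S. al a c) = (\<Sum>i<length a. \<Sum>c\<in>S. monom (if a!i = c then 1 else 0) (length a - 1 - i))"
    unfolding al_def by (rule sum.swap)
  also have "\<dots> = (\<Sum>i<length a. monom 1 (length a - 1 - i))"
  proof (rule sum.cong[OF refl])
    fix i assume i: "i \<in> {..<length a}"
    have "(\<Sum>c\<in>S. monom (if a!i = c then 1 else 0) (length a - 1 - i)) =
          (\<Sum>c\<in>S. if a!i = c then monom 1 (length a - 1 - i) else 0)"
      by (rule sum.cong) auto
    also have "\<dots> = monom 1 (length a - 1 - i)"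
      using assms i by (simp add: sum.delta subset_iff)
    finally show "(\<Sum>c\<in>S. monom (if a!i = c then 1 else 0) (length a - 1 - i)) = monom 1 (length a - 1 - i)" .
  qed
  finally show ?thesis unfolding sp_def .
qed

lemma small_dvd: assumes "(p::bit poly) dvd q" "degree q < degree p" shows "q = 0"
proof (rule ccontr)
  assume "q \<noteq> 0"
  with dvd_imp_degree_le[OF assms(1)] have "degree p \<le> degree q" by blast
  with assms(2) show False by simp
qed

lemma hash_sum_diff:
  fixes r :: "'a \<Rightarrow> bit poly"
  assumes "c \<noteq> d"
  shows "(\<Sum>i<length a. (r(c:=u, d:=v)) (a!i) * [:0,1:] ^ (length a - 1 - i))
       - (\<Sum>i<length a. (r(c:=u', d:=v')) (a!i) * [:0,1:] ^ (length a - 1 - i))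
       = (u - u') * al a c + (v - v') * al a d"
proof -
  have "(\<Sum>i<length a. (r(c:=u, d:=v)) (a!i) * [:0,1:] ^ (length a - 1 - i))
       - (\<Sum>i<length a. (r(c:=u', d:=v')) (a!i) * [:0,1:] ^ (length a - 1 - i))
     = (\<Sum>i<length a. (u - u') * monom (if a!i = c then 1 else 0) (length a - 1 - i)
                    + (v - v') * monom (if a!i = d then 1 else 0) (length a - 1 - i))"
    unfolding sum_subtractf[symmetric]
    by (rule sum.cong) (use assms in \<open>auto simp: monom_altdef algebra_simps\<close>)
  also have "\<dots> = (u - u') * al a c + (v - v') * al a d"
    unfolding al_def sum.distrib sum_distrib_left ..
  finally show ?thesis .
qed

lemma UNIV_bit: "(UNIV :: bit set) = {0, 1}" by (auto intro: bit.exhaust)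

lemma finite_UNIV_bit: "finite (UNIV :: bit set)" by (simp add: UNIV_bit)

lemma card_UNIV_bit: "card (UNIV :: bit set) = 2"
proof -
  have "(UNIV :: bit set) = {0, 1}" by (auto intro: bit.exhaust)
  moreover have "card {0::bit, 1} = 2" by simp
  ultimately show ?thesis by metis
qed
lemma GF_eq: assumes dp: "degree p > 0" shows "GF2_field p = Poly ` {xs. length xs = degree p}"
proof (intro equalityI subsetI)
  fix q assume "q \<in> GF2_field p"
  then have d: "degree q < degree p" by (simp add: GF2_field_def)
  have l: "length (coeffs q) \<le> degree p"
    using d by (cases "q = 0") (auto simp: length_coeffs)
  let ?xs = "coeffs q @ replicate (degree p - length (coeffs q)) 0"
  have "Poly ?xs = q" by simp
  moreover have "length ?xs = degree p" using l by simp
  ultimately show "q \<in> Poly ` {xs. length xs = degree p}" by (intro rev_image_eqI[of ?xs]) auto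
next
  fix q :: "bit poly" assume "q \<in> Poly ` {xs. length xs = degree p}"
  then obtain xs where q: "q = Poly xs" and l: "length xs = degree p" by auto
  show "q \<in> GF2_field p"
  proof (cases "q = 0")
    case True then show ?thesis using dp unfolding GF2_field_def by simp
  next
    case False
    have "degree q \<le> degree p - 1"
      by (rule degree_le) (auto simp: q nth_default_def l)
    moreover have "degree p \<noteq> 0" using dp by auto
    ultimately show ?thesis by (simp add: GF2_field_def)
  qed
qed

lemma card_GF: assumes dp: "degree p > 0" shows "card (GF2_field p) = 2 ^ degree p" "finite (GF2_field p)"
proof -
  have inj: "inj_on Poly {xs::bit list. length xs = degree p}"
  proof (rule inj_onI)
    fix xs ys :: "bit list"
    assume "xs \<in> {xs. length xs = degree p}" "ys \<in> {xs. length xs = degree p}"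
      "Poly xs = Poly ys"
    then show "xs = ys"
      by (metis (mono_tags, lifting) coeff_Poly_eq mem_Collect_eq nth_default_nth nth_equalityI)
  qed
  show "card (GF2_field p) = 2 ^ degree p"
  proof -
    have "card {xs::bit list. length xs = degree p} = CARD(bit) ^ degree p"
      using card_lists_length_eq[OF finite_UNIV_bit, of "degree p"] by simp
    then show ?thesis unfolding GF_eq[OF dp] card_image[OF inj] card_UNIV_bit .
  qed
  show "finite (GF2_field p)" unfolding GF_eq[OF dp]
    using finite_lists_length_eq[OF finite_UNIV_bit, of "degree p"] by simp
qed


lemma zero_GF: "(0::bit poly) \<in> GF2_field p \<longleftrightarrow> degree p > 0"
  by (simp add: GF2_field_def)

lemma hash_in_GF: assumes "p \<noteq> 0" "degree p > 0" shows "general_hash p h a \<in> GF2_field p"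
proof -
  let ?x = "(\<Sum>i<length a. h (a ! i) * [:0, 1:] ^ (length a - 1 - i))"
  have "?x mod p = 0 \<or> degree (?x mod p) < degree p" by (rule degree_mod_less[OF assms(1)])
  then show ?thesis unfolding general_hash_def GF2_field_def using assms(2) by auto
qed


lemma exists_cd:
  fixes p :: "bit poly" and a a' :: "'a list"
  assumes pr: "prime_elem p" and deg: "degree p \<ge> length a" and len: "length a' = length a"
    and ne: "a \<noteq> a'" and n1: "length a \<ge> 1" and fin: "finite S"
    and sa: "set a \<subseteq> S" and sa': "set a' \<subseteq> S"
  shows "\<exists>c\<in>S. \<exists>d\<in>S. \<not> p dvd (al a c * al a' d - al a d * al a' c)"
proof (rule ccontr)
  assume "\<not> ?thesis"
  then have H: "\<And>c d. c \<in> S \<Longrightarrow> d \<in> S \<Longrightarrow> p dvd (al a c * al a' d - al a d * al a' c)" by blast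
  define n where "n = length a"
  define s where "s = sp n"
  have sa1: "sum (al a) S = s" using sum_al[OF fin sa] by (simp add: s_def n_def)
  have sa2: "sum (al a') S = s" using sum_al[OF fin sa'] len by (simp add: s_def n_def)
  have s0: "s \<noteq> 0"
  proof
    assume "s = 0"
    then have "coeff s 0 = 0" by simp
    moreover have "coeff s 0 = 1" unfolding s_def using n1 n_def coeff_sp by simp
    ultimately show False by simp
  qed
  have ds: "degree s < degree p" using deg_sp[of n] n1 deg unfolding s_def n_def by linarith
  have nps: "\<not> p dvd s" using small_dvd ds s0 by blast
  have eq: "al a c = al a' c" if c: "c \<in> S" for c
  proof -
    have "p dvd (\<Sum>d\<in>S. al a c * al a' d - al a d * al a' c)"
      by (rule dvd_sum) (use H c in blast)
    also have "(\<Sum>d\<in>S. al a c * al a' d - al a d * al a' c) = s * (al a c - al a' c)"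
      unfolding sum_subtractf sum_distrib_left[symmetric] sum_distrib_right[symmetric] sa1 sa2
      by (simp add: algebra_simps)
    finally have "p dvd (al a c - al a' c)" using pr nps prime_elem_dvd_mult_iff by blast
    moreover have "degree (al a c - al a' c) < degree p"
      using degree_diff_le_max[of "al a c" "al a' c"] deg_al[of a c] deg_al[of a' c] len n1 deg
      by linarith
    ultimately show ?thesis using small_dvd by fastforce
  qed
  have "a = a'"
  proof (rule nth_equalityI)
    show "length a = length a'" using len by simp
    fix i assume i: "i < length a"
    have "a ! i \<in> S" using sa i by (meson nth_mem subsetD)
    then have "coeff (al a (a!i)) (length a - 1 - i) = coeff (al a' (a!i)) (length a' - 1 - i)"
      using eq len by simp
    then show "a ! i = a' ! i"
      using coeff_al[OF i, of "a!i"] coeff_al[of i a' "a!i"] i len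
      by (auto split: if_splits)
  qed
  with ne show False by simp
qed

lemma inj_Psi:
  fixes p :: "bit poly" and r :: "'a \<Rightarrow> bit poly"
  assumes pr: "prime_elem p" and nd: "\<not> p dvd (al a c * al a' d - al a d * al a' c)"
    and cd: "c \<noteq> d"
    and uv: "u \<in> GF2_field p" "v \<in> GF2_field p" "u' \<in> GF2_field p" "v' \<in> GF2_field p"
    and e1: "general_hash p (r(c:=u,d:=v)) a = general_hash p (r(c:=u',d:=v')) a"
    and e2: "general_hash p (r(c:=u,d:=v)) a' = general_hash p (r(c:=u',d:=v')) a'"
  shows "u = u' \<and> v = v'"
proof -
  define D where "D = al a c * al a' d - al a d * al a' c"
  have E1: "p dvd (u - u') * al a c + (v - v') * al a d"
    using e1 unfolding general_hash_def mod_eq_dvd_iff hash_sum_diff[OF cd] .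
  have E2: "p dvd (u - u') * al a' c + (v - v') * al a' d"
    using e2 unfolding general_hash_def mod_eq_dvd_iff hash_sum_diff[OF cd] .
  have "(u - u') * D = al a' d * ((u - u') * al a c + (v - v') * al a d)
                     - al a d * ((u - u') * al a' c + (v - v') * al a' d)"
    unfolding D_def by (simp add: algebra_simps)
  then have "p dvd (u - u') * D" using E1 E2 by (metis dvd_diff dvd_mult)
  then have "p dvd (u - u')" using pr nd prime_elem_dvd_mult_iff D_def by blast
  moreover have "degree (u - u') < degree p"
    using degree_diff_le_max[of u u'] uv by (auto simp: GF2_field_def)
  ultimately have 1: "u = u'" using small_dvd by fastforce
  have "(v - v') * D = al a c * ((u - u') * al a' c + (v - v') * al a' d)
                     - al a' c * ((u - u') * al a c + (v - v') * al a d)"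
    unfolding D_def by (simp add: algebra_simps)
  then have "p dvd (v - v') * D" using E1 E2 by (metis dvd_diff dvd_mult)
  then have "p dvd (v - v')" using pr nd prime_elem_dvd_mult_iff D_def by blast
  moreover have "degree (v - v') < degree p"
    using degree_diff_le_max[of v v'] uv by (auto simp: GF2_field_def)
  ultimately have 2: "v = v'" using small_dvd by fastforce
  from 1 2 show ?thesis ..
qed


lemma fiber_card:
  fixes p :: "bit poly" and r :: "'a \<Rightarrow> bit poly"
  assumes pr: "prime_elem p" and nd: "\<not> p dvd (al a c * al a' d - al a d * al a' c)"
    and cd: "c \<noteq> d" and dp: "degree p > 0"
    and yy: "y \<in> GF2_field p" "y' \<in> GF2_field p"
  shows "card {uv \<in> GF2_field p \<times> GF2_field p.
           (general_hash p (r(c:=fst uv, d:=snd uv)) a, general_hash p (r(c:=fst uv, d:=snd uv)) a') = (y, y')} = 1"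
proof -
  let ?F = "GF2_field p"
  define Psi where "Psi = (\<lambda>uv. (general_hash p (r(c:=fst uv, d:=snd uv)) a, general_hash p (r(c:=fst uv, d:=snd uv)) a'))"
  have p0: "p \<noteq> 0" using dp by auto
  have fin: "finite (?F \<times> ?F)" using card_GF(2)[OF dp] by simp
  have sub: "Psi ` (?F \<times> ?F) \<subseteq> ?F \<times> ?F"
    unfolding Psi_def using hash_in_GF[OF p0 dp] by auto
  have inj: "inj_on Psi (?F \<times> ?F)"
  proof (rule inj_onI)
    fix x z assume x: "x \<in> ?F \<times> ?F" and z: "z \<in> ?F \<times> ?F" and e: "Psi x = Psi z"
    obtain u v where xx: "x = (u, v)" by (cases x)
    obtain u' v' where zz: "z = (u', v')" by (cases z)
    have "u = u' \<and> v = v'"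
      by (rule inj_Psi[OF pr nd cd, of u v u' v' r]) (use x z e in \<open>auto simp: xx zz Psi_def\<close>)
    then show "x = z" by (simp add: xx zz)
  qed
  have "Psi ` (?F \<times> ?F) = ?F \<times> ?F" by (rule endo_inj_surj[OF fin sub inj])
  then obtain uv0 where uv0: "uv0 \<in> ?F \<times> ?F" "Psi uv0 = (y, y')"
    using yy by (metis (no_types, lifting) SigmaI imageE)
  have "{uv \<in> ?F \<times> ?F. Psi uv = (y, y')} = {uv0}"
  proof -
    have "uv = uv0" if "uv \<in> ?F \<times> ?F" "Psi uv = (y, y')" for uv
      using inj_onD[OF inj, of uv uv0] that uv0 by simp
    then show ?thesis using uv0 by blast
  qed
  then show ?thesis unfolding Psi_def by simp
qed

theorem mainTheorem4:
  fixes \<Sigma> :: "'a set" and n L :: nat and p :: "bit poly" and dflt :: "bit poly"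
    and a a' :: "'a list" and y y' :: "bit poly"
  assumes "finite \<Sigma>" and "\<Sigma> \<noteq> {}"
    and "n \<ge> 1"
    and "irreducible p" and "degree p = L" and "L \<ge> n"
    and "length a = n" and "set a \<subseteq> \<Sigma>"
    and "length a' = n" and "set a' \<subseteq> \<Sigma>"
    and "a \<noteq> a'"
    and "y \<in> GF2_field p" and "y' \<in> GF2_field p"
  shows "measure_pmf.prob (Pi_pmf \<Sigma> dflt (\<lambda>_. pmf_of_set (GF2_field p)))
           {h1. general_hash p h1 a = y \<and> general_hash p h1 a' = y'} = 1 / 4 ^ L"
proof -
  note fS = assms(1)
  let ?F = "GF2_field p"
  have dp: "degree p > 0" using assms(3,5,6) by linarith
  have pr: "prime_elem p" using assms(4) by (simp add: prime_elem_iff_irreducible)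
  have Ffin: "finite ?F" and Fcard: "card ?F = 2 ^ L" using card_GF[OF dp] assms(5) by auto
  have Fne: "?F \<noteq> {}" using zero_GF[of p] dp by auto
  obtain c d where c: "c \<in> \<Sigma>" and d: "d \<in> \<Sigma>" and nd: "\<not> p dvd (al a c * al a' d - al a d * al a' c)"
    using exists_cd[OF pr _ _ assms(11) _ fS assms(8) assms(10)] assms by auto
  have cd: "c \<noteq> d" proof assume "c = d" then show False using nd by simp qed
  define T where "T = \<Sigma> - {c, d}"
  define R where "R = PiE_dflt T dflt (\<lambda>_. ?F)"
  define PS where "PS = PiE_dflt \<Sigma> dflt (\<lambda>_. ?F)"
  define A where "A = {h1. general_hash p h1 a = y \<and> general_hash p h1 a' = y'}"
  define fib where "fib = (\<lambda>r. {uv \<in> ?F \<times> ?F.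
           (general_hash p (r(c:=fst uv, d:=snd uv)) a, general_hash p (r(c:=fst uv, d:=snd uv)) a') = (y, y')})"
  have Tfin: "finite T" using fS by (simp add: T_def)
  have cardS: "card \<Sigma> = card T + 2"
  proof -
    have e: "\<Sigma> = insert c (insert d T)" using c d by (auto simp: T_def)
    have "c \<notin> insert d T" using cd by (auto simp: T_def)
    moreover have "d \<notin> T" by (simp add: T_def)
    ultimately show ?thesis using Tfin by (subst e) simp
  qed
  have PSfin: "finite PS" unfolding PS_def using fS Ffin by auto
  have PSne: "PS \<noteq> {}" unfolding PS_def using Fne by simp
  have cardPS: "card PS = card ?F ^ card \<Sigma>"
    unfolding PS_def using card_PiE_dflt[OF fS, of "\<lambda>_. ?F" dflt] Ffin by simp
  have cardR: "card R = card ?F ^ card T"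
    unfolding R_def using card_PiE_dflt[OF Tfin, of "\<lambda>_. ?F" dflt] Ffin by simp
  have Rfin: "finite R" unfolding R_def using Tfin Ffin by auto
  have bij: "bij_betw (\<lambda>(r, uv). r(c:=fst uv, d:=snd uv)) (Sigma R fib) (PS \<inter> A)"
  proof (rule bij_betwI[where g = "\<lambda>h. (h(c:=dflt, d:=dflt), (h c, h d))"])
    show "(\<lambda>(r, uv). r(c:=fst uv, d:=snd uv)) \<in> Sigma R fib \<rightarrow> PS \<inter> A"
      using c d by (auto simp: R_def PS_def fib_def A_def PiE_dflt_def T_def)
    show "(\<lambda>h. (h(c:=dflt, d:=dflt), (h c, h d))) \<in> PS \<inter> A \<rightarrow> Sigma R fib"
      using cd c d by (auto simp: R_def PS_def fib_def A_def PiE_dflt_def T_def)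
    show "(\<lambda>h. (h(c:=dflt, d:=dflt), (h c, h d))) ((\<lambda>(r, uv). r(c:=fst uv, d:=snd uv)) x) = x"
      if "x \<in> Sigma R fib" for x
      using that cd by (auto simp: R_def PiE_dflt_def T_def fun_eq_iff)
    show "(\<lambda>(r, uv). r(c:=fst uv, d:=snd uv)) ((\<lambda>h. (h(c:=dflt, d:=dflt), (h c, h d))) h) = h"
      if "h \<in> PS \<inter> A" for h
      using cd by (auto simp: fun_eq_iff)
  qed
  have "card (PS \<inter> A) = card (Sigma R fib)" using bij_betw_same_card[OF bij] by simp
  also have "\<dots> = (\<Sum>r\<in>R. card (fib r))"
    by (rule card_SigmaI[OF Rfin]) (auto simp: fib_def intro: finite_subset[OF _ finite_cartesian_product[OF Ffin Ffin]])
  also have "\<dots> = (\<Sum>r\<in>R. 1)"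
    unfolding fib_def by (rule sum.cong[OF refl], rule fiber_card[OF pr nd cd dp assms(12,13)])
  also have "\<dots> = card ?F ^ card T" using cardR by simp
  finally have cA: "card (PS \<inter> A) = card ?F ^ card T" .
  have "Pi_pmf \<Sigma> dflt (\<lambda>_. pmf_of_set ?F) = pmf_of_set PS"
    unfolding PS_def by (rule Pi_pmf_of_set[OF fS]) (use Ffin Fne in auto)
  then have "measure_pmf.prob (Pi_pmf \<Sigma> dflt (\<lambda>_. pmf_of_set ?F)) A = card (PS \<inter> A) / card PS"
    using measure_pmf_of_set[OF PSne PSfin] by simp
  also have "\<dots> = real (card ?F ^ card T) / real (card ?F ^ (card T + 2))"
    unfolding cA cardPS cardS ..
  also have "\<dots> = 1 / 4 ^ L"
    proof -
    have four: "(2::real) ^ L * 2 ^ L = 4 ^ L" by (simp add: power_mult_distrib[symmetric])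
    show ?thesis unfolding Fcard using four by (simp add: power_add power_mult[symmetric] field_simps)
  qed
  finally show ?thesis unfolding A_def .
qed

end
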